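(* For every $n\ge1$ and every subset $A\subseteq\{-1,1\}^n$, $$\Big\|\sum_{x\in A}x\Big\|_2\le 2^{n-1},$$ and equality holds when $A=\{x\in\{-1,1\}^n: x_i=c\}$ for some fixed coordinate $i$ and fixed sign $c\in\{-1,1\}$. *)

theory Defs
  imports "HOL-Analysis.Analysis"
begin

definition sign_cube :: "(real ^ 'n) set" where
  "sign_cube = {x. \<forall>i. x $ i = 1 \<or> x $ i = -1}"

end

theory Submission
  imports Defs
begin

definition flip :: "'n \<Rightarrow> real ^ 'n \<Rightarrow> real ^ 'n" where
  "flip j x = (\<chi> k. if k = j then - x $ k else x $ k)"

lemma flip_nth: "flip j x $ k = (if k = j then - x $ k else x $ k)"
  by (simp add: flip_def)

lemma flip_flip [simp]: "flip j (flip j x) = x"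
  by (simp add: vec_eq_iff flip_nth)

lemma flip_in: "x \<in> sign_cube \<Longrightarrow> flip j x \<in> sign_cube"
  by (auto simp: sign_cube_def flip_nth)

lemma flip_image:
  assumes "\<And>x. x \<in> S \<Longrightarrow> flip j x \<in> S"
  shows "flip j ` S = S"
proof
  show "flip j ` S \<subseteq> S" using assms by auto
  show "S \<subseteq> flip j ` S"
  proof
    fix x assume "x \<in> S"
    then have "flip j x \<in> S" by (rule assms)
    then show "x \<in> flip j ` S" by (metis flip_flip image_eqI)
  qed
qed

lemma sum_flip:
  assumes "\<And>x. x \<in> S \<Longrightarrow> flip j x \<in> S"
  shows "(\<Sum>x\<in>S. f x) = (\<Sum>x\<in>S. f (flip j x))"
proof -
  have inj: "inj_on (flip j) S" by (metis flip_flip inj_onI)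
  have "(\<Sum>x\<in>S. f x) = (\<Sum>x\<in>flip j ` S. f x)" using flip_image[OF assms] by simp
  also have "\<dots> = (\<Sum>x\<in>S. f (flip j x))" using sum.reindex[OF inj] by simp
  finally show ?thesis .
qed

lemma finite_cube: "finite (sign_cube :: (real ^ 'n) set)"
proof -
  have "sign_cube \<subseteq> (\<lambda>S. (\<chi> i. if i \<in> S then (1::real) else -1)) ` (UNIV :: 'n set set)"
  proof
    fix x :: "real ^ 'n" assume "x \<in> sign_cube"
    then have "x = (\<chi> i. if i \<in> {i. x $ i = 1} then 1 else -1)"
      by (auto simp: vec_eq_iff sign_cube_def)
    then show "x \<in> (\<lambda>S. (\<chi> i. if i \<in> S then (1::real) else -1)) ` UNIV" by blast
  qed
  then show ?thesis by (rule finite_subset) simp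
qed

lemma card_cube: "card (sign_cube :: (real ^ 'n) set) = 2 ^ CARD('n)"
proof -
  have "bij_betw (\<lambda>x. {i. x $ i = 1}) (sign_cube :: (real ^ 'n) set) (Pow UNIV)"
  proof (rule bij_betwI')
    fix x y :: "real ^ 'n" assume "x \<in> sign_cube" "y \<in> sign_cube"
    then show "({i. x $ i = 1} = {i. y $ i = 1}) = (x = y)"
      unfolding sign_cube_def vec_eq_iff by (auto simp: set_eq_iff) (metis one_neq_neg_one)+
  next
    fix S :: "'n set" assume "S \<in> Pow UNIV"
    have "(\<chi> i. if i \<in> S then (1::real) else -1) \<in> sign_cube" by (simp add: sign_cube_def)
    moreover have "S = {i. (\<chi> i. if i \<in> S then (1::real) else -1) $ i = 1}" by auto
    ultimately show "\<exists>x\<in>sign_cube. S = {i. x $ i = 1}" by blast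
  qed auto
  then have "card (sign_cube :: (real ^ 'n) set) = card (Pow (UNIV :: 'n set))"
    by (rule bij_betw_same_card)
  then show ?thesis by (simp add: card_Pow)
qed

lemma cube_sq: "x \<in> sign_cube \<Longrightarrow> x $ i * x $ i = 1"
  by (auto simp: sign_cube_def dest: spec[of _ i])

lemma cube_cross:
  assumes "i \<noteq> j"
  shows "(\<Sum>x\<in>(sign_cube :: (real ^ 'n) set). x $ i * x $ j) = 0"
proof -
  have "(\<Sum>x\<in>(sign_cube :: (real ^ 'n) set). x $ i * x $ j)
      = (\<Sum>x\<in>sign_cube. flip j x $ i * flip j x $ j)"
    by (rule sum_flip) (rule flip_in)
  also have "\<dots> = - (\<Sum>x\<in>(sign_cube :: (real ^ 'n) set). x $ i * x $ j)"
    using assms by (simp add: flip_nth sum_negf[symmetric])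
  finally show ?thesis by simp
qed

lemma cube_prod:
  "(\<Sum>x\<in>(sign_cube :: (real ^ 'n) set). x $ i * x $ j) =
     (if i = j then real (card (sign_cube :: (real ^ 'n) set)) else 0)"
  using cube_cross[of i j] cube_sq[of _ i] by auto

lemma cube_quad:
  fixes s :: "real ^ 'n"
  shows "(\<Sum>x\<in>(sign_cube :: (real ^ 'n) set). (x \<bullet> s)^2) =
     real (card (sign_cube :: (real ^ 'n) set)) * (s \<bullet> s)"
proof -
  let ?C = "sign_cube :: (real ^ 'n) set"
  have "(\<Sum>x\<in>?C. (x \<bullet> s)^2) = (\<Sum>x\<in>?C. \<Sum>i\<in>UNIV. \<Sum>j\<in>UNIV. s$i * s$j * (x$i * x$j))"
    by (simp add: inner_vec_def power2_eq_square sum_product algebra_simps)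
  also have "\<dots> = (\<Sum>i\<in>UNIV. \<Sum>j\<in>UNIV. s$i * s$j * (\<Sum>x\<in>?C. x$i * x$j))"
    by (simp add: sum.swap[of _ ?C] sum_distrib_left)
  also have "\<dots> = (\<Sum>i\<in>UNIV. s$i * s$i * real (card ?C))"
    by (simp add: cube_prod if_distrib[of "\<lambda>t. _ * t"] cong: if_cong)
  also have "\<dots> = real (card ?C) * (s \<bullet> s)"
    by (simp add: inner_vec_def sum_distrib_left algebra_simps)
  finally show ?thesis .
qed

lemma neg_in: "x \<in> sign_cube \<Longrightarrow> - x \<in> sign_cube"
  by (auto simp: sign_cube_def)

lemma upper:
  fixes A :: "(real ^ 'n) set"
  assumes AC: "A \<subseteq> sign_cube"
  shows "norm (\<Sum>x\<in>A. x) \<le> 2 ^ (CARD('n) - 1)"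
proof -
  let ?C = "sign_cube :: (real ^ 'n) set"
  define s where "s = (\<Sum>x\<in>A. x)"
  have finA: "finite A" using finite_subset[OF AC finite_cube] .
  have N: "(2::real) ^ CARD('n) = 2 * 2 ^ (CARD('n) - 1)"
  proof -
    have "CARD('n) = Suc (CARD('n) - 1)" by simp
    then show ?thesis by (metis power_Suc)
  qed
  have "s \<bullet> s = (\<Sum>x\<in>A. x \<bullet> s)" by (simp add: s_def inner_sum_left)
  also have "\<dots> \<le> (\<Sum>x\<in>A. max 0 (x \<bullet> s))" by (rule sum_mono) simp
  also have "\<dots> \<le> (\<Sum>x\<in>?C. max 0 (x \<bullet> s))"
    by (rule sum_mono2[OF finite_cube AC]) simp
  finally have h1: "s \<bullet> s \<le> (\<Sum>x\<in>?C. max 0 (x \<bullet> s))" .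
  have injn: "inj_on uminus ?C" by (simp add: inj_on_def)
  have imn: "uminus ` ?C = ?C"
  proof
    show "uminus ` ?C \<subseteq> ?C" using neg_in by blast
    show "?C \<subseteq> uminus ` ?C"
    proof
      fix x :: "real ^ 'n" assume "x \<in> ?C"
      then have "- x \<in> ?C" by (rule neg_in)
      then show "x \<in> uminus ` ?C" by (metis minus_minus image_eqI)
    qed
  qed
  have "(\<Sum>x\<in>?C. max 0 (x \<bullet> s)) = (\<Sum>x\<in>uminus ` ?C. max 0 (x \<bullet> s))" by (simp add: imn)
  also have "\<dots> = (\<Sum>x\<in>?C. max 0 (- (x \<bullet> s)))" by (simp add: sum.reindex[OF injn])
  finally have h2: "(\<Sum>x\<in>?C. max 0 (x \<bullet> s)) = (\<Sum>x\<in>?C. max 0 (- (x \<bullet> s)))" .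
  have "2 * (\<Sum>x\<in>?C. max 0 (x \<bullet> s)) = (\<Sum>x\<in>?C. max 0 (x \<bullet> s)) + (\<Sum>x\<in>?C. max 0 (- (x \<bullet> s)))"
    using h2 by linarith
  also have "\<dots> = (\<Sum>x\<in>?C. max 0 (x \<bullet> s) + max 0 (- (x \<bullet> s)))"
    by (rule sum.distrib[symmetric])
  also have "\<dots> = (\<Sum>x\<in>?C. \<bar>x \<bullet> s\<bar>)" by (rule sum.cong) auto
  finally have h3: "2 * (\<Sum>x\<in>?C. max 0 (x \<bullet> s)) = (\<Sum>x\<in>?C. \<bar>x \<bullet> s\<bar>)" .
  have "(\<Sum>x\<in>?C. \<bar>x \<bullet> s\<bar>)^2 \<le> (\<Sum>x\<in>?C. \<bar>x \<bullet> s\<bar>^2) * card ?C"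
    by (rule sum_squared_le_sum_of_squares)
  also have "\<dots> = (real (card ?C) * norm s)^2"
  proof -
    have "(\<Sum>x\<in>?C. \<bar>x \<bullet> s\<bar>^2) = (\<Sum>x\<in>?C. (x \<bullet> s)^2)" by simp
    also have "\<dots> = real (card ?C) * (norm s)^2" by (simp only: cube_quad power2_norm_eq_inner)
    finally show ?thesis by (simp add: power_mult_distrib power2_eq_square)
  qed
  finally have "(\<Sum>x\<in>?C. \<bar>x \<bullet> s\<bar>) \<le> real (card ?C) * norm s"
    by (rule power2_le_imp_le) simp
  then have h4: "(\<Sum>x\<in>?C. \<bar>x \<bullet> s\<bar>) \<le> 2 * 2 ^ (CARD('n) - 1) * norm s"
    by (simp add: card_cube N)
  have "norm s * norm s \<le> 2 ^ (CARD('n) - 1) * norm s"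
  proof -
    have "norm s * norm s = s \<bullet> s" by (metis power2_norm_eq_inner power2_eq_square)
    then show ?thesis using h1 h3 h4 by linarith
  qed
  then show ?thesis
    unfolding s_def[symmetric]
    by (metis mult_right_le_imp_le norm_ge_zero order_le_less zero_le_power zero_le_numeral)
qed

lemma equality:
  fixes i :: "'n::finite" and c :: real
  assumes c: "c = 1 \<or> c = -1"
  shows "norm (\<Sum>x\<in>{x \<in> (sign_cube :: (real ^ 'n) set). x $ i = c}. x) = 2 ^ (CARD('n) - 1)"
proof -
  let ?C = "sign_cube :: (real ^ 'n) set"
  define B where "B = {x \<in> ?C. x $ i = c}"
  define B' where "B' = {x \<in> ?C. x $ i = - c}"
  have finB: "finite B" "finite B'" using finite_cube by (auto simp: B_def B'_def)
  have CB: "?C = B \<union> B'" using c by (auto simp: B_def B'_def sign_cube_def)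
  have dis: "B \<inter> B' = {}" using c by (auto simp: B_def B'_def)
  have injf: "inj_on (flip i) B" by (metis flip_flip inj_onI)
  have img: "flip i ` B = B'"
  proof
    show "flip i ` B \<subseteq> B'" by (auto simp: B_def B'_def flip_nth flip_in)
    show "B' \<subseteq> flip i ` B"
    proof
      fix x assume x: "x \<in> B'"
      then have "flip i x \<in> B" by (auto simp: B_def B'_def flip_nth flip_in)
      then show "x \<in> flip i ` B" by (metis flip_flip image_eqI)
    qed
  qed
  have "card B' = card B" using card_image[OF injf] img by simp
  moreover have "card ?C = card B + card B'" using card_Un_disjoint[OF finB dis] CB by simp
  ultimately have "2 ^ CARD('n) = 2 * card B" by (simp add: card_cube)
  moreover have "CARD('n) = Suc (CARD('n) - 1)" by simp
  ultimately have cardB: "card B = 2 ^ (CARD('n) - 1)" by (metis power_Suc mult_left_cancel zero_neq_numeral)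
  define s where "s = (\<Sum>x\<in>B. x)"
  have "s $ j = (if j = i then c * 2 ^ (CARD('n) - 1) else 0)" for j
  proof (cases "j = i")
    case True
    have "s $ j = (\<Sum>x\<in>B. c)" unfolding s_def sum_component using True
      by (intro sum.cong) (auto simp: B_def)
    then show ?thesis using True cardB by simp
  next
    case False
    have clos: "\<And>x. x \<in> B \<Longrightarrow> flip j x \<in> B" using False by (auto simp: B_def flip_nth flip_in)
    have "s $ j = (\<Sum>x\<in>B. x $ j)" by (simp add: s_def)
    also have "\<dots> = (\<Sum>x\<in>B. flip j x $ j)" by (rule sum_flip[OF clos])
    also have "\<dots> = - (\<Sum>x\<in>B. x $ j)" by (simp add: flip_nth sum_negf)
    finally have "(\<Sum>x\<in>B. x $ j) = 0" by (simp add: s_def)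
    then show ?thesis using False by (simp add: s_def)
  qed
  then have "s = (c * 2 ^ (CARD('n) - 1)) *\<^sub>R axis i 1"
    by (simp add: vec_eq_iff axis_def)
  then have "norm s = \<bar>c * 2 ^ (CARD('n) - 1)\<bar>" by simp
  also have "\<dots> = 2 ^ (CARD('n) - 1)" using c by (auto simp: abs_mult)
  finally show ?thesis by (simp add: s_def B_def)
qed

theorem theorem5:
  fixes A :: "(real ^ 'n) set"
  assumes "A \<subseteq> sign_cube"
  shows "norm (\<Sum>x\<in>A. x) \<le> 2 ^ (CARD('n) - 1) \<and>
         (\<forall>i c. (c = 1 \<or> c = -1) \<longrightarrow>
           norm (\<Sum>x\<in>{x \<in> (sign_cube :: (real ^ 'n) set). x $ i = c}. x) = 2 ^ (CARD('n) - 1))"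
  using upper[OF assms] equality by blast

end
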